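(* Let $q\neq0$ be real. Let $\mathcal M$ be a binary matroid represented by a matrix $M$ over $\mathrm{GF}(2)$ with rows $V$ and columns $E$, let $\boldsymbol\gamma=\{\gamma_e\}_{e\in E}$ be real weights, and let $c\in E$. Suppose $\gamma_1>0$ and $\gamma_2>0$ satisfy $1+\frac{q}{\gamma_c}=\left(1+\frac{q}{\gamma_1}\right)\left(1+\frac{q}{\gamma_2}\right)$. Let $e'$ be a new column and define $\boldsymbol\gamma'=\{\gamma'_e\}_{e\in E\cup\{e'\}}$ by $\gamma'_{e'}=\gamma_2$, $\gamma'_c=\gamma_1$ and $\gamma'_e=\gamma_e$ for all other $e\in E$. Then there is a binary matroid $\mathcal M'$ represented by a matrix $M'$ over $\mathrm{GF}(2)$ with $|V|+1$ rows and columns $E\cup\{e'\}$ such that $\left(1+\frac{\gamma_1}{q}+\frac{\gamma_2}{q}\right)\tilde Z(\mathcal M;q,\boldsymbol\gamma)=\tilde Z(\mathcal M';q,\boldsymbol\gamma')$.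
   Context: A binary matroid represented by a matrix $M$ over $\mathrm{GF}(2)$ with rows $V$ and columns $E$ has ground set $E$ and rank function $r_{\mathcal M}(A)=$ the $\mathrm{GF}(2)$-rank of the submatrix formed by the columns in $A$. The multivariate Tutte polynomial is $\tilde Z(\mathcal M;q,\boldsymbol\gamma)=\sum_{A\subseteq E}q^{-r_{\mathcal M}(A)}\prod_{e\in A}\gamma_e$. *)

theory Defs
  imports Complex_Main
begin

text \<open>A binary matroid is given by a matrix M over GF(2), encoded as
  M :: 'v => 'e => bool (True = 1), with row set V and column set E.
  A set B of columns is linearly dependent over GF(2) iff some nonempty
  subset of B sums to the zero vector, i.e. every row has an even number
  of ones among the chosen columns.\<close>

definition gf2_indep :: "'v set \<Rightarrow> ('v \<Rightarrow> 'e \<Rightarrow> bool) \<Rightarrow> 'e set \<Rightarrow> bool" where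
  "gf2_indep V M B \<longleftrightarrow>
     \<not> (\<exists>C. C \<subseteq> B \<and> C \<noteq> {} \<and> (\<forall>v\<in>V. even (card {e\<in>C. M v e})))"

definition gf2_rank :: "'v set \<Rightarrow> ('v \<Rightarrow> 'e \<Rightarrow> bool) \<Rightarrow> 'e set \<Rightarrow> nat" where
  "gf2_rank V M A = Max {card B | B. B \<subseteq> A \<and> gf2_indep V M B}"

definition tutte_Z :: "'v set \<Rightarrow> 'e set \<Rightarrow> ('v \<Rightarrow> 'e \<Rightarrow> bool) \<Rightarrow> real \<Rightarrow> ('e \<Rightarrow> real) \<Rightarrow> real" where
  "tutte_Z V E M q \<gamma> = (\<Sum>A\<in>Pow E. inverse (q ^ gf2_rank V M A) * (\<Prod>e\<in>A. \<gamma> e))"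

end

theory Submission
  imports Defs
begin

lemma sum_Pow_insert:
  assumes "finite A" "a \<notin> A"
  shows "sum f (Pow (insert a A)) = sum f (Pow A) + sum (\<lambda>B. f (insert a B)) (Pow A)"
proof -
  have inj: "inj_on (insert a) (Pow A)"
  proof (rule inj_onI)
    fix x y assume "x \<in> Pow A" "y \<in> Pow A" "insert a x = insert a y"
    hence "insert a x - {a} = insert a y - {a}" "a \<notin> x" "a \<notin> y" using assms(2) by auto
    thus "x = y" by simp
  qed
  have "Pow (insert a A) = Pow A \<union> insert a ` Pow A" by (rule Pow_insert)
  moreover have "Pow A \<inter> insert a ` Pow A = {}" using assms(2) by blast
  ultimately have "sum f (Pow (insert a A)) = sum f (Pow A) + sum f (insert a ` Pow A)"
    using assms(1) by (simp add: sum.union_disjoint)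
  also have "sum f (insert a ` Pow A) = sum (\<lambda>B. f (insert a B)) (Pow A)"
    using inj by (simp add: sum.reindex)
  finally show ?thesis .
qed

lemma indep_empty: "gf2_indep V M {}"
  unfolding gf2_indep_def by blast

lemma rank_ge:
  assumes "finite X" "B \<subseteq> X" "gf2_indep V M B"
  shows "card B \<le> gf2_rank V M X"
proof -
  have fin: "finite {card B | B. B \<subseteq> X \<and> gf2_indep V M B}"
  proof -
    have "{card B | B. B \<subseteq> X \<and> gf2_indep V M B} \<subseteq> card ` Pow X" by blast
    moreover have "finite (card ` Pow X)" using assms(1) by simp
    ultimately show ?thesis by (rule finite_subset)
  qed
  show ?thesis unfolding gf2_rank_def
    by (rule Max_ge[OF fin]) (use assms in blast)
qed

lemma rank_obtain:
  assumes "finite X"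
  shows "\<exists>B\<subseteq>X. gf2_indep V M B \<and> card B = gf2_rank V M X"
proof -
  let ?S = "{card B | B. B \<subseteq> X \<and> gf2_indep V M B}"
  have fin: "finite ?S"
  proof -
    have "?S \<subseteq> card ` Pow X" by blast
    moreover have "finite (card ` Pow X)" using assms(1) by simp
    ultimately show ?thesis by (rule finite_subset)
  qed
  have ne: "?S \<noteq> {}" using indep_empty[of V M] by blast
  have "Max ?S \<in> ?S" using Max_in[OF fin ne] .
  thus ?thesis unfolding gf2_rank_def by auto
qed

lemma rank_eqI:
  assumes "finite X" "\<And>B. B \<subseteq> X \<Longrightarrow> gf2_indep V M B \<Longrightarrow> card B \<le> k"
    "B0 \<subseteq> X" "gf2_indep V M B0" "card B0 = k"
  shows "gf2_rank V M X = k"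
proof -
  obtain B where "B \<subseteq> X" "gf2_indep V M B" "card B = gf2_rank V M X"
    using rank_obtain[OF assms(1)] by blast
  then have "gf2_rank V M X \<le> k" using assms(2)[of B] by simp
  moreover have "k \<le> gf2_rank V M X" using rank_ge[OF assms(1,3,4)] assms(5) by simp
  ultimately show ?thesis by simp
qed

definition ext :: "('v \<Rightarrow> 'e \<Rightarrow> bool) \<Rightarrow> 'e \<Rightarrow> 'e \<Rightarrow> 'v option \<Rightarrow> 'e \<Rightarrow> bool" where
  "ext M c e' = (\<lambda>w e. case w of None \<Rightarrow> e = c \<or> e = e' | Some v \<Rightarrow> e \<noteq> e' \<and> M v e)"

definition ev :: "'v set \<Rightarrow> ('v \<Rightarrow> 'e \<Rightarrow> bool) \<Rightarrow> 'e set \<Rightarrow> bool" where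
  "ev V M C \<longleftrightarrow> (\<forall>v\<in>V. even (card {e\<in>C. M v e}))"

lemma indep_ev: "gf2_indep V M B \<longleftrightarrow> \<not> (\<exists>C. C \<subseteq> B \<and> C \<noteq> {} \<and> ev V M C)"
  unfolding gf2_indep_def ev_def by simp

lemma ev_ext:
  "ev (insert None (Some ` V)) (ext M c e') C \<longleftrightarrow>
     even (card {e\<in>C. e = c \<or> e = e'}) \<and> ev V M (C - {e'})"
proof -
  have "\<And>v. {e\<in>C. ext M c e' (Some v) e} = {e\<in>C - {e'}. M v e}"
    unfolding ext_def by auto
  moreover have "{e\<in>C. ext M c e' None e} = {e\<in>C. e = c \<or> e = e'}"
    unfolding ext_def by auto
  ultimately show ?thesis unfolding ev_def by auto
qed

lemma ev_a: "c \<notin> C \<Longrightarrow> e' \<notin> C \<Longrightarrow>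
   ev (insert None (Some ` V)) (ext M c e') C \<longleftrightarrow> ev V M C"
proof -
  assume "c \<notin> C" "e' \<notin> C"
  hence h1: "{e\<in>C. e = c \<or> e = e'} = {}" and h2: "C - {e'} = C" by auto
  show ?thesis unfolding ev_ext h1 h2 by simp
qed

lemma ev_b1: "c \<in> C \<Longrightarrow> e' \<notin> C \<Longrightarrow> \<not> ev (insert None (Some ` V)) (ext M c e') C"
proof -
  assume "c \<in> C" "e' \<notin> C"
  hence h1: "{e\<in>C. e = c \<or> e = e'} = {c}" by auto
  show ?thesis unfolding ev_ext h1 by simp
qed

lemma ev_b2: "c \<notin> C \<Longrightarrow> e' \<in> C \<Longrightarrow> \<not> ev (insert None (Some ` V)) (ext M c e') C"
proof -
  assume "c \<notin> C" "e' \<in> C"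
  hence h1: "{e\<in>C. e = c \<or> e = e'} = {e'}" by auto
  show ?thesis unfolding ev_ext h1 by simp
qed

lemma ev_c: "c \<noteq> e' \<Longrightarrow> c \<in> C \<Longrightarrow> e' \<in> C \<Longrightarrow>
   ev (insert None (Some ` V)) (ext M c e') C \<longleftrightarrow> ev V M (C - {e'})"
proof -
  assume "c \<noteq> e'" "c \<in> C" "e' \<in> C"
  hence h1: "{e\<in>C. e = c \<or> e = e'} = {c, e'}" by auto
  show ?thesis unfolding ev_ext h1 using \<open>c \<noteq> e'\<close> by simp
qed

lemma I1: "c \<notin> B \<Longrightarrow> e' \<notin> B \<Longrightarrow>
   gf2_indep (insert None (Some ` V)) (ext M c e') B \<longleftrightarrow> gf2_indep V M B"
proof -
  assume a: "c \<notin> B" "e' \<notin> B"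
  have "\<And>C. C \<subseteq> B \<Longrightarrow> ev (insert None (Some ` V)) (ext M c e') C \<longleftrightarrow> ev V M C"
    using a by (intro ev_a) auto
  thus ?thesis unfolding indep_ev by blast
qed

lemma I2: "c \<notin> B \<Longrightarrow> e' \<in> B \<Longrightarrow>
   gf2_indep (insert None (Some ` V)) (ext M c e') B \<longleftrightarrow> gf2_indep V M (B - {e'})"
proof -
  assume a: "c \<notin> B" "e' \<in> B"
  have 1: "\<And>C. C \<subseteq> B \<Longrightarrow> e' \<in> C \<Longrightarrow> \<not> ev (insert None (Some ` V)) (ext M c e') C"
    using a by (intro ev_b2) auto
  have 2: "\<And>C. C \<subseteq> B - {e'} \<Longrightarrow> ev (insert None (Some ` V)) (ext M c e') C \<longleftrightarrow> ev V M C"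
    using a by (intro ev_a) auto
  show ?thesis unfolding indep_ev
  proof
    assume h: "\<not> (\<exists>C\<subseteq>B. C \<noteq> {} \<and> ev (insert None (Some ` V)) (ext M c e') C)"
    show "\<not> (\<exists>C\<subseteq>B - {e'}. C \<noteq> {} \<and> ev V M C)"
    proof
      assume "\<exists>C\<subseteq>B - {e'}. C \<noteq> {} \<and> ev V M C"
      then obtain C where "C \<subseteq> B - {e'}" "C \<noteq> {}" "ev V M C" by blast
      with 2[of C] h show False by blast
    qed
  next
    assume h: "\<not> (\<exists>C\<subseteq>B - {e'}. C \<noteq> {} \<and> ev V M C)"
    show "\<not> (\<exists>C\<subseteq>B. C \<noteq> {} \<and> ev (insert None (Some ` V)) (ext M c e') C)"
    proof
      assume "\<exists>C\<subseteq>B. C \<noteq> {} \<and> ev (insert None (Some ` V)) (ext M c e') C"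
      then obtain C where C: "C \<subseteq> B" "C \<noteq> {}" "ev (insert None (Some ` V)) (ext M c e') C" by blast
      with 1 have "e' \<notin> C" by blast
      with C have "C \<subseteq> B - {e'}" by blast
      with 2[of C] h C show False by blast
    qed
  qed
qed

lemma I3: "c \<in> B \<Longrightarrow> e' \<notin> B \<Longrightarrow>
   gf2_indep (insert None (Some ` V)) (ext M c e') B \<longleftrightarrow> gf2_indep V M (B - {c})"
proof -
  assume a: "c \<in> B" "e' \<notin> B"
  have 1: "\<And>C. C \<subseteq> B \<Longrightarrow> c \<in> C \<Longrightarrow> \<not> ev (insert None (Some ` V)) (ext M c e') C"
    using a by (intro ev_b1) auto
  have 2: "\<And>C. C \<subseteq> B - {c} \<Longrightarrow> ev (insert None (Some ` V)) (ext M c e') C \<longleftrightarrow> ev V M C"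
    using a by (intro ev_a) auto
  show ?thesis unfolding indep_ev
  proof
    assume h: "\<not> (\<exists>C\<subseteq>B. C \<noteq> {} \<and> ev (insert None (Some ` V)) (ext M c e') C)"
    show "\<not> (\<exists>C\<subseteq>B - {c}. C \<noteq> {} \<and> ev V M C)"
    proof
      assume "\<exists>C\<subseteq>B - {c}. C \<noteq> {} \<and> ev V M C"
      then obtain C where "C \<subseteq> B - {c}" "C \<noteq> {}" "ev V M C" by blast
      with 2[of C] h show False by blast
    qed
  next
    assume h: "\<not> (\<exists>C\<subseteq>B - {c}. C \<noteq> {} \<and> ev V M C)"
    show "\<not> (\<exists>C\<subseteq>B. C \<noteq> {} \<and> ev (insert None (Some ` V)) (ext M c e') C)"
    proof
      assume "\<exists>C\<subseteq>B. C \<noteq> {} \<and> ev (insert None (Some ` V)) (ext M c e') C"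
      then obtain C where C: "C \<subseteq> B" "C \<noteq> {}" "ev (insert None (Some ` V)) (ext M c e') C" by blast
      with 1 have "c \<notin> C" by blast
      with C have "C \<subseteq> B - {c}" by blast
      with 2[of C] h C show False by blast
    qed
  qed
qed

lemma I4: "c \<noteq> e' \<Longrightarrow> c \<in> B \<Longrightarrow> e' \<in> B \<Longrightarrow>
   gf2_indep (insert None (Some ` V)) (ext M c e') B \<longleftrightarrow> gf2_indep V M (B - {e'})"
proof -
  assume a: "c \<noteq> e'" "c \<in> B" "e' \<in> B"
  let ?V = "insert None (Some ` V)" and ?M = "ext M c e'"
  show ?thesis unfolding indep_ev
  proof
    assume h: "\<not> (\<exists>C\<subseteq>B. C \<noteq> {} \<and> ev ?V ?M C)"
    show "\<not> (\<exists>C\<subseteq>B - {e'}. C \<noteq> {} \<and> ev V M C)"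
    proof
      assume "\<exists>C\<subseteq>B - {e'}. C \<noteq> {} \<and> ev V M C"
      then obtain C where C: "C \<subseteq> B - {e'}" "C \<noteq> {}" "ev V M C" by blast
      show False
      proof (cases "c \<in> C")
        case True
        have ce: "insert e' C - {e'} = C" using C by auto
        have iff: "ev ?V ?M (insert e' C) \<longleftrightarrow> ev V M (insert e' C - {e'})"
          using ev_c[of c e' "insert e' C" V M] a True by blast
        have "ev ?V ?M (insert e' C)" using iff C(3) unfolding ce by blast
        moreover have "insert e' C \<subseteq> B" using C a by blast
        ultimately show False using h by blast
      next
        case False
        have "e' \<notin> C" using C by blast
        hence "ev ?V ?M C" using ev_a[OF False] C by blast
        thus False using h C by blast
      qed
    qed
  next
    assume h: "\<not> (\<exists>C\<subseteq>B - {e'}. C \<noteq> {} \<and> ev V M C)"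
    show "\<not> (\<exists>C\<subseteq>B. C \<noteq> {} \<and> ev ?V ?M C)"
    proof
      assume "\<exists>C\<subseteq>B. C \<noteq> {} \<and> ev ?V ?M C"
      then obtain C where C: "C \<subseteq> B" "C \<noteq> {}" "ev ?V ?M C" by blast
      show False
      proof (cases "c \<in> C")
        case True
        with C ev_b1[of c C e' V M] have "e' \<in> C" by blast
        hence "ev V M (C - {e'})" using ev_c[of c e' C V M] C(3) True a(1) by blast
        moreover have "C - {e'} \<subseteq> B - {e'}" "C - {e'} \<noteq> {}" using C True a by auto
        ultimately show False using h by blast
      next
        case False
        with C ev_b2[of c C e' V M] have "e' \<notin> C" by blast
        hence "ev V M C" using ev_a[of c C e' V M] C(3) False by blast
        moreover have "C \<subseteq> B - {e'}" using C \<open>e' \<notin> C\<close> by auto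
        ultimately show False using h C by blast
      qed
    qed
  qed
qed


lemma card_ins: "finite B \<Longrightarrow> x \<in> B \<Longrightarrow> card B = card (B - {x}) + 1"
  using card_Suc_Diff1 by fastforce

locale setup_ext =
  fixes V :: "'v set" and M :: "'v \<Rightarrow> 'e \<Rightarrow> bool" and c e' :: 'e and A :: "'e set"
  assumes ce: "c \<noteq> e'" and finA: "finite A" and cA: "c \<notin> A" and eA: "e' \<notin> A"
begin

abbreviation "V' \<equiv> insert None (Some ` V)"
abbreviation "M' \<equiv> ext M c e'"

lemma R1: "gf2_rank V' M' A = gf2_rank V M A"
proof -
  obtain B0 where B0: "B0 \<subseteq> A" "gf2_indep V M B0" "card B0 = gf2_rank V M A"
    using rank_obtain[OF finA] by blast
  show ?thesis
  proof (rule rank_eqI[OF finA _ B0(1) _ B0(3)])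
    fix B assume "B \<subseteq> A" "gf2_indep V' M' B"
    hence "gf2_indep V M B" using I1[of c B e' V M] cA eA by blast
    thus "card B \<le> gf2_rank V M A" using rank_ge[OF finA \<open>B \<subseteq> A\<close>] by blast
  next
    show "gf2_indep V' M' B0" using I1[of c B0 e' V M] cA eA B0 by blast
  qed
qed

lemma R2: "gf2_rank V' M' (insert e' A) = gf2_rank V M A + 1"
proof -
  obtain B0 where B0: "B0 \<subseteq> A" "gf2_indep V M B0" "card B0 = gf2_rank V M A"
    using rank_obtain[OF finA] by blast
  have fin: "finite (insert e' A)" using finA by simp
  have fB0: "finite B0" using B0(1) finA finite_subset by blast
  show ?thesis
  proof (rule rank_eqI[OF fin _ _ _ ])
    fix B assume B: "B \<subseteq> insert e' A" "gf2_indep V' M' B"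
    have fB: "finite B" using B(1) fin finite_subset by blast
    have cB: "c \<notin> B" using B(1) cA ce by blast
    show "card B \<le> gf2_rank V M A + 1"
    proof (cases "e' \<in> B")
      case True
      hence "gf2_indep V M (B - {e'})" using I2[of c B e' V M] cB B(2) by blast
      moreover have "B - {e'} \<subseteq> A" using B(1) by blast
      ultimately have "card (B - {e'}) \<le> gf2_rank V M A" using rank_ge[OF finA] by blast
      thus ?thesis using card_ins[OF fB True] by simp
    next
      case False
      hence "gf2_indep V M B" using I1[of c B e' V M] cB B(2) by blast
      moreover have "B \<subseteq> A" using B(1) False by blast
      ultimately have "card B \<le> gf2_rank V M A" using rank_ge[OF finA] by blast
      thus ?thesis by simp
    qed
  next
    show "insert e' B0 \<subseteq> insert e' A" using B0 by blast
    have "insert e' B0 - {e'} = B0" using B0(1) eA by blast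
    thus "gf2_indep V' M' (insert e' B0)" using I2[of c "insert e' B0" e' V M] B0 cA ce by auto
    have "e' \<notin> B0" using B0(1) eA by blast
    thus "card (insert e' B0) = gf2_rank V M A + 1" using fB0 B0(3) by simp
  qed
qed

lemma R3: "gf2_rank V' M' (insert c A) = gf2_rank V M A + 1"
proof -
  obtain B0 where B0: "B0 \<subseteq> A" "gf2_indep V M B0" "card B0 = gf2_rank V M A"
    using rank_obtain[OF finA] by blast
  have fin: "finite (insert c A)" using finA by simp
  have fB0: "finite B0" using B0(1) finA finite_subset by blast
  show ?thesis
  proof (rule rank_eqI[OF fin _ _ _ ])
    fix B assume B: "B \<subseteq> insert c A" "gf2_indep V' M' B"
    have fB: "finite B" using B(1) fin finite_subset by blast
    have eB: "e' \<notin> B" using B(1) eA ce by blast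
    show "card B \<le> gf2_rank V M A + 1"
    proof (cases "c \<in> B")
      case True
      hence "gf2_indep V M (B - {c})" using I3[of c B e' V M] eB B(2) by blast
      moreover have "B - {c} \<subseteq> A" using B(1) by blast
      ultimately have "card (B - {c}) \<le> gf2_rank V M A" using rank_ge[OF finA] by blast
      thus ?thesis using card_ins[OF fB True] by simp
    next
      case False
      hence "gf2_indep V M B" using I1[of c B e' V M] eB B(2) by blast
      moreover have "B \<subseteq> A" using B(1) False by blast
      ultimately have "card B \<le> gf2_rank V M A" using rank_ge[OF finA] by blast
      thus ?thesis by simp
    qed
  next
    show "insert c B0 \<subseteq> insert c A" using B0 by blast
    have "insert c B0 - {c} = B0" using B0(1) cA by blast
    thus "gf2_indep V' M' (insert c B0)" using I3[of c "insert c B0" e' V M] B0 eA ce by auto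
    have "c \<notin> B0" using B0(1) cA by blast
    thus "card (insert c B0) = gf2_rank V M A + 1" using fB0 B0(3) by simp
  qed
qed

lemma R4: "gf2_rank V' M' (insert e' (insert c A)) = gf2_rank V M (insert c A) + 1"
proof -
  have finc: "finite (insert c A)" using finA by simp
  obtain B0 where B0: "B0 \<subseteq> insert c A" "gf2_indep V M B0" "card B0 = gf2_rank V M (insert c A)"
    using rank_obtain[OF finc] by blast
  have fin: "finite (insert e' (insert c A))" using finA by simp
  have fB0: "finite B0" using B0(1) finc finite_subset by blast
  have eB0: "e' \<notin> B0" using B0(1) eA ce by blast
  have mono: "\<And>B. B \<subseteq> insert c A \<Longrightarrow> gf2_indep V M B \<Longrightarrow> card B \<le> gf2_rank V M (insert c A)"
    using rank_ge[OF finc] by blast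
  show ?thesis
  proof (cases "c \<in> B0")
    case True
    show ?thesis
    proof (rule rank_eqI[OF fin _ _ _ ])
      fix B assume B: "B \<subseteq> insert e' (insert c A)" "gf2_indep V' M' B"
      have fB: "finite B" using B(1) fin finite_subset by blast
      show "card B \<le> gf2_rank V M (insert c A) + 1"
      proof (cases "e' \<in> B")
        case eT: True
        show ?thesis
        proof (cases "c \<in> B")
          case True
          hence "gf2_indep V M (B - {e'})" by (rule iffD1[OF I4[OF ce _ eT] B(2)])
          moreover have "B - {e'} \<subseteq> insert c A" using B(1) by auto
          ultimately have "card (B - {e'}) \<le> gf2_rank V M (insert c A)" by (meson mono)
          thus ?thesis using card_ins[OF fB eT] by simp
        next
          case False
          hence "gf2_indep V M (B - {e'})" by (rule iffD1[OF I2[OF _ eT] B(2)])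
          moreover have "B - {e'} \<subseteq> insert c A" using B(1) by auto
          ultimately have "card (B - {e'}) \<le> gf2_rank V M (insert c A)" by (meson mono)
          thus ?thesis using card_ins[OF fB eT] by simp
        qed
      next
        case eF: False
        show ?thesis
        proof (cases "c \<in> B")
          case True
          hence "gf2_indep V M (B - {c})" by (rule iffD1[OF I3[OF _ eF] B(2)])
          moreover have "B - {c} \<subseteq> insert c A" using B(1) eF by auto
          ultimately have "card (B - {c}) \<le> gf2_rank V M (insert c A)" by (meson mono)
          thus ?thesis using card_ins[OF fB True] by simp
        next
          case False
          hence "gf2_indep V M B" by (rule iffD1[OF I1[OF _ eF] B(2)])
          moreover have "B \<subseteq> insert c A" using B(1) eF by auto
          ultimately have "card B \<le> gf2_rank V M (insert c A)" by (meson mono)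
          thus ?thesis by simp
        qed
      qed
    next
      show "insert e' B0 \<subseteq> insert e' (insert c A)" using B0(1) by auto
      have eq: "insert e' B0 - {e'} = B0" using eB0 by blast
      have iff: "gf2_indep V' M' (insert e' B0) \<longleftrightarrow> gf2_indep V M (insert e' B0 - {e'})"
        using True by (intro I4 ce) auto
      show "gf2_indep V' M' (insert e' B0)" using iff B0(2) unfolding eq by blast
      show "card (insert e' B0) = gf2_rank V M (insert c A) + 1" using fB0 B0(3) eB0 by simp
    qed
  next
    case False
    show ?thesis
    proof (rule rank_eqI[OF fin _ _ _ ])
      fix B assume B: "B \<subseteq> insert e' (insert c A)" "gf2_indep V' M' B"
      have fB: "finite B" using B(1) fin finite_subset by blast
      show "card B \<le> gf2_rank V M (insert c A) + 1"
      proof (cases "e' \<in> B")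
        case eT: True
        show ?thesis
        proof (cases "c \<in> B")
          case True
          hence "gf2_indep V M (B - {e'})" by (rule iffD1[OF I4[OF ce _ eT] B(2)])
          moreover have "B - {e'} \<subseteq> insert c A" using B(1) by auto
          ultimately have "card (B - {e'}) \<le> gf2_rank V M (insert c A)" by (meson mono)
          thus ?thesis using card_ins[OF fB eT] by simp
        next
          case False
          hence "gf2_indep V M (B - {e'})" by (rule iffD1[OF I2[OF _ eT] B(2)])
          moreover have "B - {e'} \<subseteq> insert c A" using B(1) by auto
          ultimately have "card (B - {e'}) \<le> gf2_rank V M (insert c A)" by (meson mono)
          thus ?thesis using card_ins[OF fB eT] by simp
        qed
      next
        case eF: False
        show ?thesis
        proof (cases "c \<in> B")
          case True
          hence "gf2_indep V M (B - {c})" by (rule iffD1[OF I3[OF _ eF] B(2)])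
          moreover have "B - {c} \<subseteq> insert c A" using B(1) eF by auto
          ultimately have "card (B - {c}) \<le> gf2_rank V M (insert c A)" by (meson mono)
          thus ?thesis using card_ins[OF fB True] by simp
        next
          case False
          hence "gf2_indep V M B" by (rule iffD1[OF I1[OF _ eF] B(2)])
          moreover have "B \<subseteq> insert c A" using B(1) eF by auto
          ultimately have "card B \<le> gf2_rank V M (insert c A)" by (meson mono)
          thus ?thesis by simp
        qed
      qed
    next
      show "insert c B0 \<subseteq> insert e' (insert c A)" using B0(1) by auto
      have eq: "insert c B0 - {c} = B0" using False by blast
      have iff: "gf2_indep V' M' (insert c B0) \<longleftrightarrow> gf2_indep V M (insert c B0 - {c})"
        using eB0 ce by (intro I3) auto
      show "gf2_indep V' M' (insert c B0)" using iff B0(2) unfolding eq by blast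
      show "card (insert c B0) = gf2_rank V M (insert c A) + 1" using fB0 B0(3) False by simp
    qed
  qed
qed

end


lemma key_alg:
  fixes q g g1 g2 :: real
  assumes "q \<noteq> 0" "g \<noteq> 0" "g1 > 0" "g2 > 0"
    and "1 + q / g = (1 + q / g1) * (1 + q / g2)"
  shows "g * (q + g1 + g2) = g1 * g2"
proof -
  have "(1 + q / g) * (g * g1 * g2) = ((1 + q / g1) * (1 + q / g2)) * (g * g1 * g2)"
    using assms(5) by simp
  moreover have "(1 + q / g) * (g * g1 * g2) = g1 * g2 * (g + q)"
    using assms(2) by (simp add: field_simps)
  moreover have "((1 + q / g1) * (1 + q / g2)) * (g * g1 * g2) = g * (g1 + q) * (g2 + q)"
    using assms(3,4) by (simp add: field_simps)
  ultimately have "g1 * g2 * (g + q) = g * (g1 + q) * (g2 + q)" by simp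
  hence "q * (g1 * g2) = q * (g * (q + g1 + g2))" by (simp add: algebra_simps)
  thus ?thesis using assms(1) by simp
qed

theorem mainTheorem5:
  fixes V :: "'v set" and E :: "'e set" and M :: "'v \<Rightarrow> 'e \<Rightarrow> bool"
    and q \<gamma>1 \<gamma>2 :: real and \<gamma> :: "'e \<Rightarrow> real" and c e' :: 'e
  assumes "q \<noteq> 0"
    and "finite V" and "finite E"
    and "c \<in> E" and "e' \<notin> E"
    and "\<gamma> c \<noteq> 0"
    and "\<gamma>1 > 0" and "\<gamma>2 > 0"
    and "1 + q / \<gamma> c = (1 + q / \<gamma>1) * (1 + q / \<gamma>2)"
  shows "\<exists>M' :: 'v option \<Rightarrow> 'e \<Rightarrow> bool.
           (1 + \<gamma>1 / q + \<gamma>2 / q) * tutte_Z V E M q \<gamma>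
             = tutte_Z (insert None (Some ` V)) (insert e' E) M' q (\<gamma>(c := \<gamma>1, e' := \<gamma>2))"
proof (intro exI)
  define E0 where "E0 = E - {c}"
  have E: "E = insert c E0" using assms(4) E0_def by blast
  have fE0: "finite E0" using assms(3) E0_def by simp
  have cE0: "c \<notin> E0" using E0_def by simp
  have eE0: "e' \<notin> E0" using assms(5) E0_def by simp
  have ce: "c \<noteq> e'" using assms(4,5) by blast
  have eE: "e' \<notin> insert c E0" using assms(5) E by simp
  have key: "\<gamma> c * (q + \<gamma>1 + \<gamma>2) = \<gamma>1 * \<gamma>2"
    using key_alg[OF assms(1,6,7,8,9)] .
  let ?V' = "insert None (Some ` V)" and ?M' = "ext M c e'" and ?g = "\<gamma>(c := \<gamma>1, e' := \<gamma>2)"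
  let ?f = "\<lambda>A. inverse (q ^ gf2_rank V M A) * (\<Prod>e\<in>A. \<gamma> e)"
  let ?h = "\<lambda>A. inverse (q ^ gf2_rank ?V' ?M' A) * (\<Prod>e\<in>A. ?g e)"
  let ?K = "1 + \<gamma>1 / q + \<gamma>2 / q"
  have L: "tutte_Z V E M q \<gamma> = (\<Sum>A\<in>Pow E0. ?f A + ?f (insert c A))"
    unfolding tutte_Z_def E by (simp add: sum_Pow_insert[OF fE0 cE0] sum.distrib)
  have R: "tutte_Z ?V' (insert e' E) ?M' q ?g =
     (\<Sum>A\<in>Pow E0. (?h A + ?h (insert c A)) + (?h (insert e' A) + ?h (insert e' (insert c A))))"
    unfolding tutte_Z_def E
    by (simp add: sum_Pow_insert[OF _ eE] sum_Pow_insert[OF fE0 cE0] fE0 sum.distrib)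
  have tm: "?K * (?f A + ?f (insert c A)) =
      (?h A + ?h (insert c A)) + (?h (insert e' A) + ?h (insert e' (insert c A)))"
    if A: "A \<in> Pow E0" for A
  proof -
    have fA: "finite A" using A fE0 finite_subset by blast
    have cA: "c \<notin> A" and eA: "e' \<notin> A" using A cE0 eE0 by auto
    interpret S: setup_ext V M c e' A using ce fA cA eA by unfold_locales
    define r where "r = gf2_rank V M A"
    define rc where "rc = gf2_rank V M (insert c A)"
    define P where "P = (\<Prod>e\<in>A. \<gamma> e)"
    have PA: "(\<Prod>e\<in>A. ?g e) = P" unfolding P_def using cA eA by (intro prod.cong) auto
    have h1: "?h A = inverse (q ^ r) * P" using S.R1 PA r_def by simp
    have h2: "?h (insert c A) = inverse (q ^ r) / q * (\<gamma>1 * P)"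
      using S.R3 PA r_def fA cA ce by (simp add: field_simps)
    have h3: "?h (insert e' A) = inverse (q ^ r) / q * (\<gamma>2 * P)"
      using S.R2 PA r_def fA eA ce by (simp add: field_simps)
    have h4: "?h (insert e' (insert c A)) = inverse (q ^ rc) / q * (\<gamma>2 * (\<gamma>1 * P))"
      using S.R4 PA rc_def fA eA cA ce by (simp add: field_simps)
    have f1: "?f A = inverse (q ^ r) * P" using r_def P_def by simp
    have f2: "?f (insert c A) = inverse (q ^ rc) * (\<gamma> c * P)" using rc_def P_def fA cA by simp
    have k2: "?K * \<gamma> c = \<gamma>1 * \<gamma>2 / q"
      using key assms(1) by (simp add: field_simps)
    have "?K * (?f A + ?f (insert c A)) = ?K * (inverse (q ^ r) * P) + (?K * \<gamma> c) * (inverse (q ^ rc) * P)"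
      unfolding f1 f2 by (simp add: algebra_simps)
    also have "\<dots> = (?h A + ?h (insert c A)) + (?h (insert e' A) + ?h (insert e' (insert c A)))"
      unfolding h1 h2 h3 h4 k2 using assms(1) by (simp add: field_simps)
    finally show ?thesis .
  qed
  show "?K * tutte_Z V E M q \<gamma> = tutte_Z ?V' (insert e' E) ?M' q ?g"
    unfolding L R sum_distrib_left using tm by (intro sum.cong) auto
qed

end
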